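(* For an integer $n\ge 4$, let $f(n)$ be the minimum number of edges of a finite simple edge-pancyclic graph of order $n$ having at least one edge. Then $$\frac{3n}{2}\le f(n)\le 2n-2 .$$
   Context: A $k$-cycle is a cycle of length $k$. A graph $G$ of order $n$ is edge-pancyclic if for every integer $k$ with $3\le k\le n$, every edge of $G$ lies in a $k$-cycle. Edgeless graphs, which are vacuously edge-pancyclic, are excluded. *)

theory Defs
  imports Complex_Main
begin

definition simple_graph :: "nat \<Rightarrow> nat set set \<Rightarrow> bool" where
  "simple_graph n E \<longleftrightarrow> (\<forall>e\<in>E. e \<subseteq> {..<n} \<and> card e = 2)"

definition is_cycle :: "nat set set \<Rightarrow> nat list \<Rightarrow> bool" where
  "is_cycle E c \<longleftrightarrow> length c \<ge> 3 \<and> distinct c \<and>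
     (\<forall>i<length c. {c ! i, c ! ((i + 1) mod length c)} \<in> E)"

definition cycle_edges :: "nat list \<Rightarrow> nat set set" where
  "cycle_edges c = {{c ! i, c ! ((i + 1) mod length c)} | i. i < length c}"

definition edge_pancyclic :: "nat \<Rightarrow> nat set set \<Rightarrow> bool" where
  "edge_pancyclic n E \<longleftrightarrow>
     (\<forall>k. 3 \<le> k \<and> k \<le> n \<longrightarrow>
        (\<forall>e\<in>E. \<exists>c. is_cycle E c \<and> length c = k \<and> e \<in> cycle_edges c))"

definition f :: "nat \<Rightarrow> nat" where
  "f n = Min {card E | E. simple_graph n E \<and> E \<noteq> {} \<and> edge_pancyclic n E}"

end

theory Submission
  imports Defs
begin

lemma mod2: "(x::nat) < 2*n \<Longrightarrow> x mod n = (if x < n then x else x - n)"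
  by (metis le_mod_geq mod_less mult_2 not_le less_diff_conv2 mod_less)

lemma fwd_eq: "(p::nat) < L \<Longrightarrow> Suc p mod L = (if Suc p = L then 0 else Suc p)"
  by (auto simp: mod2)

lemma bwd_eq: "(p::nat) < L \<Longrightarrow> (p+L-Suc 0) mod L = (if p = 0 then L-1 else p-1)"
  using mod2[of "p+L-1" L] by auto

lemma arith_nbrs:
  assumes "(p::nat) < L" "3 \<le> L"
  shows "(p+1) mod L \<noteq> (p+L-1) mod L" "(p+1) mod L \<noteq> p" "(p+L-1) mod L \<noteq> p"
        "((p+L-1) mod L + 1) mod L = p" "(p+1) mod L < L" "(p+L-1) mod L < L"
proof -
  have "(p+L-Suc 0) mod L < L" using assms by simp
  then show "(p+1) mod L \<noteq> (p+L-1) mod L" "(p+1) mod L \<noteq> p" "(p+L-1) mod L \<noteq> p"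
        "((p+L-1) mod L + 1) mod L = p" "(p+1) mod L < L" "(p+L-1) mod L < L"
  using assms by (auto simp: fwd_eq bwd_eq)
qed

lemma arith4:
  assumes "(r::nat) < n" "4 \<le> n"
  shows "(r+n-1) mod n \<noteq> ((r+1) mod n + 1) mod n"
proof -
  have "Suc r mod n < n" using assms by simp
  then show ?thesis using assms
    by (auto simp: fwd_eq bwd_eq)
qed


lemma cyc_edge: "is_cycle E c \<Longrightarrow> t < length c \<Longrightarrow> {c!t, c!((t+1) mod length c)} \<in> E"
  unfolding is_cycle_def by blast

lemma nbrs:
  assumes c: "is_cycle E c" and p: "p < length c"
  defines "L \<equiv> length c"
  shows "{c!p, c!((p+1) mod L)} \<in> E" "{c!p, c!((p+L-1) mod L)} \<in> E"
        "c!((p+1) mod L) \<noteq> c!((p+L-1) mod L)" "c!((p+1) mod L) \<noteq> c!p"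
        "c!((p+L-1) mod L) \<noteq> c!p"
proof -
  have L3: "3 \<le> L" "distinct c" using c unfolding is_cycle_def L_def by auto
  note ar = arith_nbrs[OF p[folded L_def] L3(1)]
  show "{c!p, c!((p+1) mod L)} \<in> E" using cyc_edge[OF c p] L_def by simp
  have "{c!((p+L-1) mod L), c!(((p+L-1) mod L+1) mod L)} \<in> E"
    using cyc_edge[OF c, of "(p+L-1) mod L"] ar L_def by simp
  then show "{c!p, c!((p+L-1) mod L)} \<in> E" using ar by (simp add: insert_commute)
  show "c!((p+1) mod L) \<noteq> c!((p+L-1) mod L)" "c!((p+1) mod L) \<noteq> c!p"
        "c!((p+L-1) mod L) \<noteq> c!p"
    using ar L3(2) p L_def by (simp_all add: nth_eq_iff_index_eq)
qed

lemma cyc_sub: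
  assumes sg: "simple_graph n E" and c: "is_cycle E c"
  shows "set c \<subseteq> {..<n}"
proof
  fix x assume "x \<in> set c"
  then obtain t where t: "t < length c" "x = c!t" by (auto simp: in_set_conv_nth)
  have "{c!t, c!((t+1) mod length c)} \<in> E" using cyc_edge[OF c t(1)] .
  then show "x \<in> {..<n}" using sg t unfolding simple_graph_def by blast
qed

lemma ham_set:
  assumes sg: "simple_graph n E" and c: "is_cycle E c" and len: "length c = n"
  shows "set c = {..<n}"
proof -
  have "card (set c) = n" using c len distinct_card unfolding is_cycle_def by auto
  then show ?thesis using cyc_sub[OF sg c] by (simp add: card_subset_eq)
qed

lemma in_cedges: "e \<in> cycle_edges c \<Longrightarrow> \<exists>t<length c. e = {c!t, c!((t+1) mod length c)}"
  unfolding cycle_edges_def by blast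


lemma deg3:
  assumes sg: "simple_graph n E" and ne: "E \<noteq> {}" and ep: "edge_pancyclic n E"
    and n4: "4 \<le> n" and v: "v < n"
  shows "\<exists>e1 e2 e3. e1\<in>E \<and> e2\<in>E \<and> e3\<in>E \<and> v\<in>e1 \<and> v\<in>e2 \<and> v\<in>e3
           \<and> e1 \<noteq> e2 \<and> e1 \<noteq> e3 \<and> e2 \<noteq> e3"
proof (rule ccontr)
  assume H0: "\<not> ?thesis"
  have cyc: "\<And>k e. 3 \<le> k \<Longrightarrow> k \<le> n \<Longrightarrow> e \<in> E \<Longrightarrow> \<exists>c. is_cycle E c \<and> length c = k \<and> e \<in> cycle_edges c"
    using ep unfolding edge_pancyclic_def by blast
  obtain e0 where e0: "e0 \<in> E" using ne by blast
  obtain C1 where C1: "is_cycle E C1" "length C1 = n" using cyc[of n e0] n4 e0 by auto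
  have "v \<in> set C1" using ham_set[OF sg C1] v by simp
  then obtain p where p: "p < n" "C1!p = v" using C1(2) by (auto simp: in_set_conv_nth)
  define a where "a = C1!((p+1) mod n)"
  define b where "b = C1!((p+n-1) mod n)"
  note nb = nbrs[OF C1(1), of p, unfolded C1(2)]
  have ea: "{v,a} \<in> E" and eb: "{v,b} \<in> E" and ab: "a \<noteq> b" "a \<noteq> v" "b \<noteq> v"
    using nb p unfolding a_def b_def by auto
  have H: "\<And>e. e \<in> E \<Longrightarrow> v \<in> e \<Longrightarrow> e = {v,a} \<or> e = {v,b}"
  proof (rule ccontr)
    fix e assume "e \<in> E" "v \<in> e" "\<not> (e = {v, a} \<or> e = {v, b})"
    moreover have "{v,a} \<noteq> {v,b}" using ab by (auto simp: doubleton_eq_iff)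
    ultimately show False using H0 ea eb by blast
  qed
  have H2: "\<And>u. {v,u} \<in> E \<Longrightarrow> u \<noteq> v \<Longrightarrow> u = a \<or> u = b"
    using H by (auto simp: doubleton_eq_iff)
  have Q: "\<And>c q. is_cycle E c \<Longrightarrow> q < length c \<Longrightarrow> c!q = v \<Longrightarrow>
     {c!((q+1) mod length c), c!((q+length c-1) mod length c)} = {a,b}"
  proof -
    fix c q assume c: "is_cycle E c" "q < length c" "c!q = v"
    note nb2 = nbrs[OF c(1) c(2)]
    then show "{c!((q+1) mod length c), c!((q+length c-1) mod length c)} = {a,b}"
      using H2[of "c!((q+1) mod length c)"] H2[of "c!((q+length c-1) mod length c)"] c(3)
      by auto
  qed
  obtain d where d: "is_cycle E d" "length d = 3" "{v,a} \<in> cycle_edges d"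
    using cyc[of 3 "{v,a}"] n4 ea by auto
  obtain t where t: "t < 3" "{v,a} = {d!t, d!((t+1) mod 3)}" using in_cedges[OF d(3)] d(2) by auto
  have "v \<in> set d" using t d(2) by (auto simp: doubleton_eq_iff)
  then obtain q where q: "q < 3" "d!q = v" using d(2) by (auto simp: in_set_conv_nth)
  have Qd: "{d!((q+1) mod 3), d!((q+2) mod 3)} = {a,b}"
    using Q[OF d(1)] q d(2) by (simp add: add.commute)
  have "{d!((q+1) mod 3), d!(((q+1) mod 3 + 1) mod 3)} \<in> E"
    using cyc_edge[OF d(1), of "(q+1) mod 3"] d(2) by simp
  moreover have "((q+1) mod 3 + 1) mod 3 = (q+2) mod 3" by presburger
  ultimately have abE: "{a,b} \<in> E" using Qd by simp
  obtain C where C: "is_cycle E C" "length C = n" "{a,b} \<in> cycle_edges C"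
    using cyc[of n "{a,b}"] n4 abE by auto
  obtain i where i: "i < n" "{a,b} = {C!i, C!((i+1) mod n)}" using in_cedges[OF C(3)] C(2) by auto
  have "v \<in> set C" using ham_set[OF sg C(1,2)] v by simp
  then obtain r where r: "r < n" "C!r = v" using C(2) by (auto simp: in_set_conv_nth)
  have Qc: "{C!((r+1) mod n), C!((r+n-1) mod n)} = {C!i, C!((i+1) mod n)}"
    using Q[OF C(1)] r C(2) i(2) by simp
  have dC: "distinct C" using C(1) unfolding is_cycle_def by simp
  have lt: "(r+1) mod n < n" "(r+n-1) mod n < n" "(i+1) mod n < n" using n4 by auto
  have idx: "{(r+1) mod n, (r+n-1) mod n} = {i, (i+1) mod n}"
    using Qc lt i(1) dC C(2) unfolding doubleton_eq_iff by (simp add: nth_eq_iff_index_eq)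
  show False
  proof (cases "(r+1) mod n = i")
    case True
    then have "(r+n-1) mod n = (i+1) mod n" using idx by (auto simp: doubleton_eq_iff)
    then show False using arith4[OF r(1) n4] True by simp
  next
    case False
    then have "(r+1) mod n = (i+1) mod n" "(r+n-1) mod n = i" using idx by (auto simp: doubleton_eq_iff)
    then have "((r+n-1) mod n + 1) mod n = (r+1) mod n" by simp
    then have "r = (r+1) mod n" using arith_nbrs(4)[OF r(1)] n4 by simp
    then show False using arith_nbrs(2)[OF r(1)] n4 by simp
  qed
qed


lemma handshake:
  assumes sg: "simple_graph n E"
  shows "(\<Sum>v<n. card {e\<in>E. v\<in>e}) = 2 * card E"
proof -
  have fE: "finite E" proof (rule finite_subset)
    show "E \<subseteq> Pow {..<n}" using sg unfolding simple_graph_def by blast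
  qed simp
  have "(\<Sum>v<n. card {e\<in>E. v\<in>e}) = (\<Sum>v<n. \<Sum>e\<in>E. if v \<in> e then 1 else 0)"
  proof (rule sum.cong[OF refl])
    fix v
    have "(\<Sum>e\<in>E. if v \<in> e then 1 else 0) = card (E \<inter> {e. v\<in>e})" using fE by (simp add: sum.If_cases)
    moreover have "E \<inter> {e. v\<in>e} = {e\<in>E. v\<in>e}" by blast
    ultimately show "card {e\<in>E. v\<in>e} = (\<Sum>e\<in>E. if v \<in> e then 1 else 0)" by simp
  qed
  also have "\<dots> = (\<Sum>e\<in>E. \<Sum>v<n. if v \<in> e then 1 else 0)" by (rule sum.swap)
  also have "\<dots> = (\<Sum>e\<in>E. card ({..<n} \<inter> e))" by (simp add: sum.If_cases)
  also have "\<dots> = (\<Sum>e\<in>E. 2)"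
  proof (rule sum.cong[OF refl])
    fix e assume "e \<in> E"
    then have "e \<subseteq> {..<n}" "card e = 2" using sg unfolding simple_graph_def by auto
    then show "card ({..<n} \<inter> e) = 2" by (simp add: Int_absorb1)
  qed
  finally show ?thesis by simp
qed

lemma lower:
  assumes sg: "simple_graph n E" and ne: "E \<noteq> {}" and ep: "edge_pancyclic n E"
    and n4: "4 \<le> n"
  shows "3 * n \<le> 2 * card E"
proof -
  have fE: "finite E" proof (rule finite_subset)
    show "E \<subseteq> Pow {..<n}" using sg unfolding simple_graph_def by blast
  qed simp
  have "\<And>v. v < n \<Longrightarrow> 3 \<le> card {e\<in>E. v\<in>e}"
  proof -
    fix v assume "v < n"
    from deg3[OF sg ne ep n4 this] obtain e1 e2 e3 where "e1\<in>E \<and> e2\<in>E \<and> e3\<in>E \<and> v\<in>e1 \<and> v\<in>e2 \<and> v\<in>e3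
           \<and> e1 \<noteq> e2 \<and> e1 \<noteq> e3 \<and> e2 \<noteq> e3" by blast
    then have "{e1,e2,e3} \<subseteq> {e\<in>E. v\<in>e}" "card {e1,e2,e3} = 3" by auto
    moreover have "finite {e\<in>E. v\<in>e}" using fE by simp
    ultimately show "3 \<le> card {e\<in>E. v\<in>e}" using card_mono by metis
  qed
  then have "(\<Sum>v<n. 3) \<le> (\<Sum>v<n. card {e\<in>E. v\<in>e})" by (intro sum_mono) auto
  then show ?thesis using handshake[OF sg] by simp
qed


lemma mod_inj: assumes "(i+x) mod (m::nat) = (i+y) mod m" "x < m" "y < m" shows "x = y"
proof (cases "x \<le> y")
  case True
  then have d: "m dvd y - x" using mod_eq_dvd_iff_nat[of "i+x" "i+y" m] assms(1) by simp
  show ?thesis proof (rule ccontr)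
    assume "x \<noteq> y" then have "0 < y - x" using True by simp
    then have "m \<le> y - x" using d dvd_imp_le by blast
    then show False using assms by simp
  qed
next
  case False
  then have d: "m dvd x - y" using mod_eq_dvd_iff_nat[of "i+y" "i+x" m] assms(1) by simp
  show ?thesis proof (rule ccontr)
    assume "x \<noteq> y" then have "0 < x - y" using False by simp
    then have "m \<le> x - y" using d dvd_imp_le by blast
    then show False using assms by simp
  qed
qed

definition W :: "nat \<Rightarrow> nat set set" where
  "W m = {{i, Suc i mod m} | i. i<m} \<union> {{i, m} | i. i<m}"

definition cyc :: "nat \<Rightarrow> nat \<Rightarrow> nat \<Rightarrow> nat list" where
  "cyc m i k = m # map (\<lambda>j. (i+j) mod m) [0..<k-1]"

lemma W_rim: "j < m \<Longrightarrow> {j, Suc j mod m} \<in> W m" unfolding W_def by blast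
lemma W_spoke: "j < m \<Longrightarrow> {j, m} \<in> W m" unfolding W_def by blast

lemma W_sg: "3 \<le> m \<Longrightarrow> simple_graph (Suc m) (W m)"
  unfolding simple_graph_def
proof
  fix e assume m3: "3 \<le> m" and e: "e \<in> W m"
  then obtain i where i: "i < m" "e = {i, Suc i mod m} \<or> e = {i, m}" unfolding W_def by blast
  have a: "Suc i mod m \<noteq> i" using m3 i(1) by (cases "Suc i = m") auto
  have b: "Suc i mod m < m" using i(1) by simp
  show "e \<subseteq> {..<Suc m} \<and> card e = 2"
    using i(2)
  proof
    assume "e = {i, Suc i mod m}"
    then show ?thesis using a less_SucI[OF b] i(1) by auto
  next
    assume "e = {i, m}"
    then show ?thesis using i(1) by auto
  qed
qed

lemma W_card: "card (W m) \<le> 2 * m"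
proof -
  have e1: "{{i, Suc i mod m} | i. i<m} = (\<lambda>i. {i, Suc i mod m}) ` {..<m}"
    by (simp only: setcompr_eq_image lessThan_def)
  have e2: "{{i, m} | i. i<m} = (\<lambda>i. {i, m}) ` {..<m}"
    by (simp only: setcompr_eq_image lessThan_def)
  have "card (W m) \<le> card {{i, Suc i mod m} | i. i<m} + card {{i, m} | i. i<m}"
    unfolding W_def by (rule card_Un_le)
  also have "\<dots> \<le> card {..<m} + card {..<m}"
    unfolding e1 e2 by (intro add_mono card_image_le) auto
  finally show ?thesis by simp
qed

lemma cyc_len: "1 \<le> k \<Longrightarrow> length (cyc m i k) = k"
  unfolding cyc_def by simp

lemma cyc_nth0: "cyc m i k ! 0 = m" unfolding cyc_def by simp

lemma cyc_nth: "0 < t \<Longrightarrow> t < k \<Longrightarrow> cyc m i k ! t = (i + (t-1)) mod m"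
  unfolding cyc_def by (cases t) auto

lemma cyc_cycle:
  assumes m3: "3 \<le> m" and i: "i < m" and k: "3 \<le> k" "k \<le> Suc m"
  shows "is_cycle (W m) (cyc m i k)"
  unfolding is_cycle_def
proof (intro conjI allI impI)
  show "3 \<le> length (cyc m i k)" using k cyc_len by simp
  have "inj_on (\<lambda>j. (i+j) mod m) {0..<k-1}"
  proof (rule inj_onI)
    fix x y assume "x \<in> {0..<k-1}" "y \<in> {0..<k-1}" "(i+x) mod m = (i+y) mod m"
    then show "x = y" using k mod_inj[of i x m y] by simp
  qed
  then show "distinct (cyc m i k)" unfolding cyc_def
  proof -
    have "\<And>j. (i+j) mod m < m" using m3 by simp
    then have "m \<notin> set (map (\<lambda>j. (i+j) mod m) [0..<k-1])" by (auto simp: less_irrefl) (metis less_irrefl)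
    then show "distinct (m # map (\<lambda>j. (i+j) mod m) [0..<k-1])" using \<open>inj_on _ _\<close> by (simp add: distinct_map)
  qed
next
  fix t assume t: "t < length (cyc m i k)"
  then have t': "t < k" using cyc_len k by simp
  have L: "length (cyc m i k) = k" using cyc_len k by simp
  show "{cyc m i k ! t, cyc m i k ! ((t + 1) mod length (cyc m i k))} \<in> W m"
  proof (cases "t = 0")
    case True
    then have "cyc m i k ! t = m" "cyc m i k ! ((t + 1) mod length (cyc m i k)) = i"
      using cyc_nth[of 1 k m i] cyc_nth0 L k i by auto
    then show ?thesis using i W_spoke[of i m] by (simp add: insert_commute)
  next
    case False
    show ?thesis
    proof (cases "t + 1 = k")
      case True
      then have "cyc m i k ! t = (i + (t-1)) mod m" "cyc m i k ! ((t + 1) mod length (cyc m i k)) = m"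
        using cyc_nth[of t k m i] cyc_nth0 L False by auto
      moreover have "(i + (t-1)) mod m < m" using m3 by simp
      ultimately show ?thesis using W_spoke by simp
    next
      case F2: False
      then have "cyc m i k ! t = (i + (t-1)) mod m" "cyc m i k ! ((t + 1) mod length (cyc m i k)) = (i+t) mod m"
        using cyc_nth[of t k m i] cyc_nth[of "t+1" k m i] L False t' by auto
      moreover have "(i+t) mod m = Suc ((i + (t-1)) mod m) mod m" using False
        by (simp add: mod_Suc_eq)
      moreover have "(i + (t-1)) mod m < m" using m3 by simp
      ultimately show ?thesis using W_rim by simp
    qed
  qed
qed

lemma W_pan:
  assumes m3: "3 \<le> m"
  shows "edge_pancyclic (Suc m) (W m)"
  unfolding edge_pancyclic_def
proof (intro allI impI ballI)
  fix k e assume k: "3 \<le> k \<and> k \<le> Suc m" and e: "e \<in> W m"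
  have L: "length (cyc m i k) = k" for i using cyc_len k by simp
  from e obtain i where i: "i < m" "e = {i, Suc i mod m} \<or> e = {i, m}" unfolding W_def by blast
  have c1: "cyc m i k ! 1 = i" using cyc_nth[of 1 k m i] k i by simp
  have c2: "cyc m i k ! 2 = Suc i mod m" using cyc_nth[of 2 k m i] k i by simp
  have "{cyc m i k ! 0, cyc m i k ! ((0+1) mod k)} \<in> cycle_edges (cyc m i k)"
    unfolding cycle_edges_def using L k by fastforce
  then have s: "{i, m} \<in> cycle_edges (cyc m i k)" using c1 cyc_nth0 k by (simp add: insert_commute)
  have "{cyc m i k ! 1, cyc m i k ! ((1+1) mod k)} \<in> cycle_edges (cyc m i k)"
    unfolding cycle_edges_def using L k by fastforce
  then have r: "{i, Suc i mod m} \<in> cycle_edges (cyc m i k)" using c1 c2 k by (simp add: numeral_2_eq_2)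
  show "\<exists>c. is_cycle (W m) c \<and> length c = k \<and> e \<in> cycle_edges c"
    using cyc_cycle[OF m3 i(1)] k L s r i(2) by blast
qed


theorem theorem4:
  fixes n :: nat
  assumes "n \<ge> 4"
  shows "3 * real n / 2 \<le> real (f n) \<and> f n \<le> 2 * n - 2"
proof -
  define S where "S = {card E | E. simple_graph n E \<and> E \<noteq> {} \<and> edge_pancyclic n E}"
  have fS: "finite S"
  proof -
    have "S \<subseteq> card ` Pow (Pow {..<n})"
      unfolding S_def simple_graph_def by blast
    then show ?thesis by (rule finite_subset) simp
  qed
  define m where "m = n - 1"
  have m3: "3 \<le> m" and nm: "n = Suc m" using assms unfolding m_def by auto
  have Wne: "W m \<noteq> {}" using W_spoke[of 0 m] m3 by auto
  have WS: "card (W m) \<in> S" unfolding S_def using W_sg[OF m3] W_pan[OF m3] Wne nm by auto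
  have fn: "f n = Min S" unfolding f_def S_def by simp
  have up: "f n \<le> 2 * n - 2" using Min_le[OF fS WS] W_card[of m] fn nm by simp
  have "Min S \<in> S" using Min_in[OF fS] WS by auto
  then obtain E where E0: "simple_graph n E" "E \<noteq> {}" "edge_pancyclic n E" "Min S = card E"
    unfolding S_def by blast
  note E = E0(1-3) E0(4)[folded fn]
  have "3 * n \<le> 2 * f n" using lower[OF E(1-3) assms] E(4) by simp
  then have "3 * real n \<le> 2 * real (f n)" by linarith
  then show ?thesis using up by simp
qed

end
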